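(* Fix $m,n$. The following are equivalent. (1) For any triangulations $\mathcal{T},\mathcal{T}'$ of $C(m,n)$, $\mathcal{T}\leqslant_1\mathcal{T}'$ if and only if $\mathcal{T}\leqslant_2\mathcal{T}'$. (2) For any triangulations $\mathcal{T},\mathcal{T}'$ of $C(m,n)$ with $\mathcal{T}<_2\mathcal{T}'$, there exists a triangulation $\mathcal{T}''$ of $C(m,n)$ with $\mathcal{T}\lessdot_1\mathcal{T}''\leqslant_2\mathcal{T}'$. (3) For any triangulations $\mathcal{T},\mathcal{T}'$ of $C(m,n)$ with $\mathcal{T}<_2\mathcal{T}'$, there exists a triangulation $\mathcal{T}''$ of $C(m,n)$ with $\mathcal{T}\leqslant_2\mathcal{T}''\lessdot_1\mathcal{T}'$.
   Context: $C(m,n)$ is the cyclic polytope: the convex hull in $\mathbb{R}^n$ of $p_n(t_i)=(t_i,t_i^2,\dots,t_i^n)$, $i\in[m]$, $t_1<\dots<t_m$. A triangulation is a set of $(n+1)$-subsets of $[m]$ whose geometric simplices form a simplicial complex with union $C(m,n)$. For $U\subseteq[m]$ with $|U|=n+2$, $C(U,n)$ has two triangulations, the lower one (the lower facets of $C(U,n+1)$) and the upper one (the upper facets), where an $n$-subset $F\subseteq U$ is a lower (upper) facet iff each $w\in U\setminus F$ has an even (odd) number of elements of $F$ above it. If $\{S\in\mathcal{T}:S\subseteq U\}$ is the lower triangulation of $C(U,n)$, replacing it by the upper one gives an increasing bistellar flip $\mathcal{T}'$ of $\mathcal{T}$, written $\mathcal{T}\lessdot_1\mathcal{T}'$; $\leqslant_1$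 is the reflexive transitive closure of $\lessdot_1$. Each triangulation $\mathcal{T}$ gives a piecewise-linear map $\sigma_{\mathcal{T}}:C(m,n)\to\mathbb{R}^{n+1}$ mapping each of its simplices affinely with $p_n(t_s)\mapsto p_{n+1}(t_s)$; $\mathcal{T}\leqslant_2\mathcal{T}'$ iff $\sigma_{\mathcal{T}}(z)_{n+1}\leqslant\sigma_{\mathcal{T}'}(z)_{n+1}$ for all $z$, and $<_2$ means $\leqslant_2$ and $\neq$. *)

theory Defs
  imports Complex_Main
begin

text \<open>Points of R^n are represented as functions nat => real, coordinates 1..n
(coordinates outside {1..n} are 0).\<close>

definition moment :: "nat \<Rightarrow> (nat \<Rightarrow> real) \<Rightarrow> nat \<Rightarrow> (nat \<Rightarrow> real)" where
  "moment n t s = (\<lambda>i. if 1 \<le> i \<and> i \<le> n then t s ^ i else 0)"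

definition bary :: "nat \<Rightarrow> (nat \<Rightarrow> real) \<Rightarrow> nat set \<Rightarrow> (nat \<Rightarrow> real) \<Rightarrow> (nat \<Rightarrow> real) \<Rightarrow> bool" where
  "bary n t S l z \<longleftrightarrow> (\<forall>s\<in>S. 0 \<le> l s) \<and> sum l S = 1 \<and>
      z = (\<lambda>i. \<Sum>s\<in>S. l s * moment n t s i)"

definition conv_pts :: "nat \<Rightarrow> (nat \<Rightarrow> real) \<Rightarrow> nat set \<Rightarrow> (nat \<Rightarrow> real) set" where
  "conv_pts n t S = {z. \<exists>l. bary n t S l z}"

definition triangulation :: "nat \<Rightarrow> nat \<Rightarrow> (nat \<Rightarrow> real) \<Rightarrow> nat set set \<Rightarrow> bool" where
  "triangulation m n t T \<longleftrightarrow>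
     (\<forall>S\<in>T. S \<subseteq> {1..m} \<and> card S = n + 1) \<and>
     (\<forall>S\<in>T. \<forall>S'\<in>T. conv_pts n t S \<inter> conv_pts n t S' = conv_pts n t (S \<inter> S')) \<and>
     (\<Union>S\<in>T. conv_pts n t S) = conv_pts n t {1..m}"

text \<open>Lower / upper triangulations of C(U,n) for |U| = n+2 (Gale evenness).\<close>
definition lower_tri :: "nat \<Rightarrow> nat set \<Rightarrow> nat set set" where
  "lower_tri n U = {F. F \<subseteq> U \<and> card F = n + 1 \<and>
      (\<forall>w\<in>U - F. even (card {f\<in>F. w < f}))}"

definition upper_tri :: "nat \<Rightarrow> nat set \<Rightarrow> nat set set" where
  "upper_tri n U = {F. F \<subseteq> U \<and> card F = n + 1 \<and>
      (\<forall>w\<in>U - F. odd (card {f\<in>F. w < f}))}"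

definition flip1 :: "nat \<Rightarrow> nat \<Rightarrow> (nat \<Rightarrow> real) \<Rightarrow> nat set set \<Rightarrow> nat set set \<Rightarrow> bool" where
  "flip1 m n t T T' \<longleftrightarrow> triangulation m n t T \<and> triangulation m n t T' \<and>
     (\<exists>U. U \<subseteq> {1..m} \<and> card U = n + 2 \<and>
          {S\<in>T. S \<subseteq> U} = lower_tri n U \<and>
          T' = (T - lower_tri n U) \<union> upper_tri n U)"

definition leq1 :: "nat \<Rightarrow> nat \<Rightarrow> (nat \<Rightarrow> real) \<Rightarrow> nat set set \<Rightarrow> nat set set \<Rightarrow> bool" where
  "leq1 m n t T T' \<longleftrightarrow> (T = T' \<and> triangulation m n t T) \<or> (flip1 m n t)\<^sup>+\<^sup>+ T T'"

text \<open>Last coordinate of sigma_T(z): on the simplex S of T containing z,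
sigma_T is affine with p_n(t_s) \<mapsto> p_{n+1}(t_s).\<close>
definition sigma_last :: "nat \<Rightarrow> (nat \<Rightarrow> real) \<Rightarrow> nat set set \<Rightarrow> (nat \<Rightarrow> real) \<Rightarrow> real" where
  "sigma_last n t T z = (THE h. \<exists>S\<in>T. \<exists>l. bary n t S l z \<and> h = (\<Sum>s\<in>S. l s * t s ^ (n + 1)))"

definition leq2 :: "nat \<Rightarrow> nat \<Rightarrow> (nat \<Rightarrow> real) \<Rightarrow> nat set set \<Rightarrow> nat set set \<Rightarrow> bool" where
  "leq2 m n t T T' \<longleftrightarrow> (\<forall>z\<in>conv_pts n t {1..m}. sigma_last n t T z \<le> sigma_last n t T' z)"

definition less2 :: "nat \<Rightarrow> nat \<Rightarrow> (nat \<Rightarrow> real) \<Rightarrow> nat set set \<Rightarrow> nat set set \<Rightarrow> bool" where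
  "less2 m n t T T' \<longleftrightarrow> leq2 m n t T T' \<and> T \<noteq> T'"

end

theory Submission imports Defs "HOL-Computational_Algebra.Polynomial"
begin

lemma prod_poly:
  fixes y :: "nat \<Rightarrow> real" assumes "finite F"
  shows "\<exists>c. c (card F) = 1 \<and> (\<forall>x. (\<Prod>f\<in>F. x - y f) = (\<Sum>i\<le>card F. c i * x ^ i))"
proof -
  define Q where "Q = (\<Prod>f\<in>F. [:- y f, 1:])"
  have nz: "\<And>f. [:- y f, 1:] \<noteq> 0" by simp
  have dq: "degree Q = card F"
    unfolding Q_def by (subst degree_prod_sum_eq) (auto simp: nz)
  have lc: "coeff Q (card F) = 1"
    using lead_coeff_prod[of "\<lambda>f. [:- y f, 1:]" F] dq unfolding Q_def by simp
  have "\<forall>x. (\<Prod>f\<in>F. x - y f) = (\<Sum>i\<le>card F. coeff Q i * x ^ i)"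
  proof
    fix x
    have "(\<Prod>f\<in>F. x - y f) = poly Q x" unfolding Q_def poly_prod by simp
    also have "\<dots> = (\<Sum>i\<le>card F. coeff Q i * x ^ i)" using poly_altdef[of Q x] dq by simp
    finally show "(\<Prod>f\<in>F. x - y f) = (\<Sum>i\<le>card F. coeff Q i * x ^ i)" .
  qed
  with lc show ?thesis by blast
qed

lemma moment_poly:
  fixes \<mu> y :: "nat \<Rightarrow> real"
  assumes "finite A" "finite F" "\<forall>i<card F. (\<Sum>s\<in>A. \<mu> s * y s ^ i) = 0"
  shows "(\<Sum>s\<in>A. \<mu> s * (\<Prod>f\<in>F. y s - y f)) = (\<Sum>s\<in>A. \<mu> s * y s ^ card F)"
proof -
  obtain c where c1: "c (card F) = 1" and c: "\<And>x. (\<Prod>f\<in>F. x - y f) = (\<Sum>i\<le>card F. c i * x ^ i)"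
    using prod_poly[OF assms(2), of y] by blast
  have "(\<Sum>s\<in>A. \<mu> s * (\<Prod>f\<in>F. y s - y f)) = (\<Sum>s\<in>A. \<Sum>i\<le>card F. c i * (\<mu> s * y s ^ i))"
    by (simp add: c sum_distrib_left mult_ac)
  also have "\<dots> = (\<Sum>i\<le>card F. c i * (\<Sum>s\<in>A. \<mu> s * y s ^ i))"
    by (subst sum.swap) (simp add: sum_distrib_left)
  also have "\<dots> = (\<Sum>i<card F. c i * (\<Sum>s\<in>A. \<mu> s * y s ^ i)) + c (card F) * (\<Sum>s\<in>A. \<mu> s * y s ^ card F)"
    by (simp add: lessThan_Suc_atMost[symmetric])
  also have "\<dots> = (\<Sum>s\<in>A. \<mu> s * y s ^ card F)"
    using assms(3) c1 by simp
  finally show ?thesis .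
qed

lemma vander_zero:
  fixes \<mu> y :: "nat \<Rightarrow> real"
  assumes inj: "inj_on y A" and fin: "finite A" and cA: "card A \<le> n + 1"
    and mom: "\<forall>i\<le>n. (\<Sum>s\<in>A. \<mu> s * y s ^ i) = 0" and a: "a \<in> A"
  shows "\<mu> a = 0"
proof -
  define F where "F = A - {a}"
  have fF: "finite F" and cF: "card F \<le> n" using fin cA a by (auto simp: F_def)
  have "(\<Sum>s\<in>A. \<mu> s * (\<Prod>f\<in>F. y s - y f)) = (\<Sum>s\<in>A. \<mu> s * y s ^ card F)"
    by (rule moment_poly) (use fin fF cF mom in auto)
  also have "\<dots> = 0" using mom cF by simp
  finally have z: "(\<Sum>s\<in>A. \<mu> s * (\<Prod>f\<in>F. y s - y f)) = 0" .
  have "(\<Sum>s\<in>A. \<mu> s * (\<Prod>f\<in>F. y s - y f)) = \<mu> a * (\<Prod>f\<in>F. y a - y f) + (\<Sum>s\<in>F. \<mu> s * (\<Prod>f\<in>F. y s - y f))"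
    using fin a unfolding F_def by (simp add: sum.remove)
  also have "(\<Sum>s\<in>F. \<mu> s * (\<Prod>f\<in>F. y s - y f)) = 0"
    using fF by (intro sum.neutral) auto
  finally have "\<mu> a * (\<Prod>f\<in>F. y a - y f) = 0" using z by simp
  moreover have "(\<Prod>f\<in>F. y a - y f) \<noteq> 0"
    using fF inj a unfolding F_def by (auto simp: inj_on_def)
  ultimately show ?thesis by simp
qed

lemma bary_finite: "bary n t S l z \<Longrightarrow> finite S"
  unfolding bary_def by (metis sum.infinite zero_neq_one)

lemma bary_mom:
  assumes "bary n t S l z" "i \<le> n"
  shows "(\<Sum>s\<in>S. l s * t s ^ i) = (if i = 0 then 1 else z i)"
  using assms unfolding bary_def moment_def by auto

lemma bary_mom_eq:
  assumes "bary n t S l z" "bary n t S' l' z" "i \<le> n"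
  shows "(\<Sum>s\<in>S. l s * t s ^ i) = (\<Sum>s\<in>S'. l' s * t s ^ i)"
  using bary_mom[OF assms(1,3)] bary_mom[OF assms(2,3)] by simp

lemma sum_ext:
  fixes f g :: "nat \<Rightarrow> real"
  assumes "finite A" "B \<subseteq> A"
  shows "(\<Sum>s\<in>A. (if s \<in> B then f s else 0) * g s) = (\<Sum>s\<in>B. f s * g s)"
proof -
  have "(\<Sum>s\<in>A. (if s \<in> B then f s else 0) * g s) = (\<Sum>s\<in>A. (if s \<in> B then f s * g s else 0))"
    by (rule sum.cong) auto
  also have "\<dots> = (\<Sum>s\<in>B. f s * g s)"
    using assms by (simp add: sum.If_cases Int_absorb1)
  finally show ?thesis .
qed

lemma bary_sub:
  assumes inj: "inj_on t A" and cA: "card A \<le> n + 1" and BA: "B \<subseteq> A"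
    and b1: "bary n t A l z" and b2: "bary n t B l' z" and s: "s \<in> A"
  shows "l s = (if s \<in> B then l' s else 0)"
proof -
  have fA: "finite A" using bary_finite[OF b1] .
  define \<mu> where "\<mu> s = l s - (if s \<in> B then l' s else 0)" for s
  have "\<forall>i\<le>n. (\<Sum>s\<in>A. \<mu> s * t s ^ i) = 0"
  proof (intro allI impI)
    fix i assume i: "i \<le> n"
    have "(\<Sum>s\<in>A. \<mu> s * t s ^ i) = (\<Sum>s\<in>A. l s * t s ^ i) - (\<Sum>s\<in>A. (if s \<in> B then l' s else 0) * t s ^ i)"
      unfolding \<mu>_def by (simp add: left_diff_distrib sum_subtractf)
    also have "\<dots> = (\<Sum>s\<in>A. l s * t s ^ i) - (\<Sum>s\<in>B. l' s * t s ^ i)"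
      using sum_ext[OF fA BA] by simp
    also have "\<dots> = 0" using bary_mom_eq[OF b1 b2 i] by simp
    finally show "(\<Sum>s\<in>A. \<mu> s * t s ^ i) = 0" .
  qed
  from vander_zero[OF inj fA cA this s] show ?thesis unfolding \<mu>_def by simp
qed

lemma bary_sub_sum:
  fixes g :: "nat \<Rightarrow> real"
  assumes inj: "inj_on t A" and cA: "card A \<le> n + 1" and BA: "B \<subseteq> A"
    and b1: "bary n t A l z" and b2: "bary n t B l' z"
  shows "(\<Sum>s\<in>A. l s * g s) = (\<Sum>s\<in>B. l' s * g s)"
proof -
  have fA: "finite A" using bary_finite[OF b1] .
  have "(\<Sum>s\<in>A. l s * g s) = (\<Sum>s\<in>A. (if s \<in> B then l' s else 0) * g s)"
    using bary_sub[OF inj cA BA b1 b2] by (intro sum.cong) auto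
  also have "\<dots> = (\<Sum>s\<in>B. l' s * g s)" by (rule sum_ext[OF fA BA])
  finally show ?thesis .
qed

lemma conv_iff: "z \<in> conv_pts n t S \<longleftrightarrow> (\<exists>l. bary n t S l z)"
  unfolding conv_pts_def by simp

lemma tri_cover:
  assumes "triangulation m n t T" "z \<in> conv_pts n t {1..m}"
  shows "\<exists>S\<in>T. \<exists>l. bary n t S l z"
  using assms unfolding triangulation_def conv_iff[symmetric] by blast

lemma tri_sub:
  assumes "triangulation m n t T" "S \<in> T"
  shows "S \<subseteq> {1..m}" "card S = n + 1"
  using assms unfolding triangulation_def by auto

lemma sigma_eq:
  assumes mono: "strict_mono_on {1..m} t" and T: "triangulation m n t T"
    and S: "S \<in> T" and b: "bary n t S l z"
  shows "sigma_last n t T z = (\<Sum>s\<in>S. l s * t s ^ (n+1))"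
proof -
  have "h = (\<Sum>s\<in>S. l s * t s ^ (n+1))" if "\<exists>S'\<in>T. \<exists>l'. bary n t S' l' z \<and> h = (\<Sum>s\<in>S'. l' s * t s ^ (n + 1))" for h
  proof -
  note that
  then obtain S' l' where S': "S' \<in> T" and b': "bary n t S' l' z" and h: "h = (\<Sum>s\<in>S'. l' s * t s ^ (n + 1))"
    by blast
  have inj: "inj_on t {1..m}" using mono by (rule strict_mono_on_imp_inj_on)
  have "z \<in> conv_pts n t S \<inter> conv_pts n t S'" using b b' by (auto simp: conv_iff)
  also have "\<dots> = conv_pts n t (S \<inter> S')" using T S S' unfolding triangulation_def by blast
  finally obtain l0 where b0: "bary n t (S \<inter> S') l0 z" by (auto simp: conv_iff)
  have s1: "(\<Sum>s\<in>S. l s * t s ^ (n+1)) = (\<Sum>s\<in>S\<inter>S'. l0 s * t s ^ (n+1))"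
    by (rule bary_sub_sum[OF inj_on_subset[OF inj] _ _ b b0]) (use tri_sub[OF T S] in auto)
  have s2: "(\<Sum>s\<in>S'. l' s * t s ^ (n+1)) = (\<Sum>s\<in>S\<inter>S'. l0 s * t s ^ (n+1))"
    by (rule bary_sub_sum[OF inj_on_subset[OF inj] _ _ b' b0]) (use tri_sub[OF T S'] in auto)
  show "h = (\<Sum>s\<in>S. l s * t s ^ (n+1))" using h s1 s2 by simp
  qed
  then show ?thesis unfolding sigma_last_def using S b by (intro the_equality) blast+
qed

lemma flip_core:
  assumes inj: "inj_on t U" and fU: "finite U" and SU: "S' \<subseteq> U" and U: "U = insert a S" and aS: "a \<notin> S"
    and cS: "card S = n + 1" and b: "bary n t S l z" and b': "bary n t S' l' z"
  shows "(\<Sum>s\<in>S'. l' s * t s ^ (n+1)) - (\<Sum>s\<in>S. l s * t s ^ (n+1))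
          = (if a \<in> S' then l' a else 0) * (\<Prod>f\<in>S. t a - t f)"
proof -
  have fS: "finite S" using bary_finite[OF b] .
  have SsU: "S \<subseteq> U" using U by auto
  define \<mu> where "\<mu> s = (if s \<in> S' then l' s else 0) - (if s \<in> S then l s else 0)" for s
  have musum: "(\<Sum>s\<in>U. \<mu> s * t s ^ i) = (\<Sum>s\<in>S'. l' s * t s ^ i) - (\<Sum>s\<in>S. l s * t s ^ i)" for i
  proof -
    have "(\<Sum>s\<in>U. \<mu> s * t s ^ i) = (\<Sum>s\<in>U. (if s \<in> S' then l' s else 0) * t s ^ i) - (\<Sum>s\<in>U. (if s \<in> S then l s else 0) * t s ^ i)"
      unfolding \<mu>_def by (simp add: left_diff_distrib sum_subtractf)
    also have "\<dots> = (\<Sum>s\<in>S'. l' s * t s ^ i) - (\<Sum>s\<in>S. l s * t s ^ i)"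
      using sum_ext[OF fU SU] sum_ext[OF fU SsU] by simp
    finally show ?thesis .
  qed
  have "(\<Sum>s\<in>U. \<mu> s * (\<Prod>f\<in>S. t s - t f)) = (\<Sum>s\<in>U. \<mu> s * t s ^ card S)"
    by (rule moment_poly[OF fU fS]) (use musum bary_mom_eq[OF b' b] cS in auto)
  also have "\<dots> = (\<Sum>s\<in>S'. l' s * t s ^ (n+1)) - (\<Sum>s\<in>S. l s * t s ^ (n+1))"
    by (subst musum) (simp add: cS)
  finally have e: "(\<Sum>s\<in>U. \<mu> s * (\<Prod>f\<in>S. t s - t f)) = (\<Sum>s\<in>S'. l' s * t s ^ (n+1)) - (\<Sum>s\<in>S. l s * t s ^ (n+1))" .
  have "(\<Sum>s\<in>U. \<mu> s * (\<Prod>f\<in>S. t s - t f)) = \<mu> a * (\<Prod>f\<in>S. t a - t f) + (\<Sum>s\<in>S. \<mu> s * (\<Prod>f\<in>S. t s - t f))"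
    unfolding U using fS aS by simp
  also have "(\<Sum>s\<in>S. \<mu> s * (\<Prod>f\<in>S. t s - t f)) = 0"
    using fS by (intro sum.neutral) auto
  finally show ?thesis using e aS unfolding \<mu>_def by simp
qed

lemma prod_pos_even:
  fixes t :: "nat \<Rightarrow> real" and a m :: nat
  assumes mono: "strict_mono_on {1..m} t" and S: "S \<subseteq> {1..m}" and a: "a \<in> {1..m}" and aS: "a \<notin> S"
    and ev: "even (card {f\<in>S. a < f})" and fS: "finite S"
  shows "(\<Prod>f\<in>S. t a - t f) > 0"
proof -
  let ?L = "{f\<in>S. f < a}" and ?R = "{f\<in>S. a < f}"
  have Sp: "S = ?L \<union> ?R" using aS by (auto simp: not_less_iff_gr_or_eq)
  have "(\<Prod>f\<in>S. t a - t f) = (\<Prod>f\<in>?L. t a - t f) * (\<Prod>f\<in>?R. t a - t f)"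
    by (subst Sp, rule prod.union_disjoint) (use fS in auto)
  moreover have "(\<Prod>f\<in>?L. t a - t f) > 0"
  proof (rule prod_pos)
    fix f assume "f \<in> ?L"
    then have "t f < t a" using mono S a unfolding strict_mono_on_def by auto
    then show "0 < t a - t f" by simp
  qed
  moreover have "(\<Prod>f\<in>?R. t a - t f) > 0"
  proof -
    have "(\<Prod>f\<in>?R. t a - t f) = (\<Prod>f\<in>?R. (-1) * (t f - t a))" by simp
    also have "\<dots> = (-1) ^ card ?R * (\<Prod>f\<in>?R. t f - t a)"
      by (subst prod.distrib) (simp only: prod_constant)
    also have "\<dots> = (\<Prod>f\<in>?R. t f - t a)" using ev by simp
    also have "\<dots> > 0"
    proof (rule prod_pos)
      fix f assume "f \<in> ?R"
      then have "t a < t f" using mono S a unfolding strict_mono_on_def by auto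
      then show "0 < t f - t a" by simp
    qed
    finally show ?thesis .
  qed
  ultimately show ?thesis by simp
qed

lemma lower_upper_disj:
  assumes "F \<in> lower_tri n U" "F \<in> upper_tri n U" "card U = n + 2"
  shows False
proof -
  have "finite U" using assms(3) card.infinite by fastforce
  moreover have "F \<subseteq> U" "card F = n + 1" using assms(1) unfolding lower_tri_def by auto
  ultimately have "U - F \<noteq> {}"
  proof (intro notI)
    assume "U - F = {}" "F \<subseteq> U" "card F = n + 1"
    then have "U = F" by blast
    then show False using \<open>card F = n + 1\<close> assms(3) by simp
  qed
  then obtain w where "w \<in> U - F" by blast
  then show False using assms(1,2) unfolding lower_tri_def upper_tri_def by auto
qed

lemma bary_drop:
  assumes b: "bary n t S l z" and BS: "B \<subseteq> S" and z: "\<forall>s\<in>S - B. l s = 0"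
  shows "bary n t B l z"
proof -
  have fS: "finite S" using bary_finite[OF b] .
  have "sum g S = sum g B" if "\<forall>s\<in>S - B. g s = 0" for g :: "nat \<Rightarrow> real"
    using sum.mono_neutral_right[OF fS BS that] .
  have s1: "sum l S = sum l B" using z by (intro sum.mono_neutral_right[OF fS BS]) auto
  have s2: "(\<lambda>i. \<Sum>s\<in>S. l s * moment n t s i) = (\<lambda>i. \<Sum>s\<in>B. l s * moment n t s i)"
    using z by (intro ext sum.mono_neutral_right[OF fS BS]) auto
  show ?thesis using b BS s1 s2 unfolding bary_def by auto
qed

lemma flip_data:
  assumes "flip1 m n t T T'"
  obtains U where "triangulation m n t T" "triangulation m n t T'" "U \<subseteq> {1..m}" "card U = n + 2"
    "{S\<in>T. S \<subseteq> U} = lower_tri n U" "T' = (T - lower_tri n U) \<union> upper_tri n U"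
  using assms unfolding flip1_def by blast

lemma lower_split:
  assumes "S \<in> lower_tri n U" "card U = n + 2"
  obtains a where "a \<in> U" "a \<notin> S" "U = insert a S" "S \<subseteq> U" "card S = n + 1"
    "even (card {f\<in>S. a < f})"
proof -
  have fU: "finite U" using assms(2) card.infinite by fastforce
  have SU: "S \<subseteq> U" and cS: "card S = n + 1" using assms(1) unfolding lower_tri_def by auto
  have "card (U - S) = 1" using card_Diff_subset[OF finite_subset[OF SU fU] SU] cS assms(2) by simp
  then obtain a where a: "U - S = {a}" by (rule card_1_singletonE)
  then have "a \<in> U" "a \<notin> S" "U = insert a S" using SU by auto
  moreover have "even (card {f\<in>S. a < f})" using assms(1) a unfolding lower_tri_def by auto
  ultimately show ?thesis using that SU cS by blast
qed

lemma flip_mono: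
  assumes mono: "strict_mono_on {1..m} t" and fl: "flip1 m n t T T'"
  shows "leq2 m n t T T'"
  unfolding leq2_def
proof
  fix z assume z: "z \<in> conv_pts n t {1..m}"
  obtain U where T: "triangulation m n t T" and T': "triangulation m n t T'" and U: "U \<subseteq> {1..m}" "card U = n + 2"
    "{S\<in>T. S \<subseteq> U} = lower_tri n U" "T' = (T - lower_tri n U) \<union> upper_tri n U"
    using flip_data[OF fl] by blast
  have inj: "inj_on t {1..m}" using mono by (rule strict_mono_on_imp_inj_on)
  obtain S l where S: "S \<in> T" "bary n t S l z" using tri_cover[OF T z] by blast
  obtain S' l' where S': "S' \<in> T'" "bary n t S' l' z" using tri_cover[OF T' z] by blast
  have e: "sigma_last n t T z = (\<Sum>s\<in>S. l s * t s ^ (n+1))" by (rule sigma_eq[OF mono T S])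
  have e': "sigma_last n t T' z = (\<Sum>s\<in>S'. l' s * t s ^ (n+1))" by (rule sigma_eq[OF mono T' S'])
  show "sigma_last n t T z \<le> sigma_last n t T' z"
  proof (cases "S' \<in> T")
    case True
    then show ?thesis using sigma_eq[OF mono T True S'(2)] e' by simp
  next
    case False
    hence S'up: "S' \<in> upper_tri n U" using U(4) S'(1) by blast
    show ?thesis
    proof (cases "S \<in> lower_tri n U")
      case False
      then have "S \<in> T'" using U(4) S(1) by blast
      then show ?thesis using sigma_eq[OF mono T' _ S(2)] e by simp
    next
      case True
      obtain a where a: "a \<in> U" "a \<notin> S" "U = insert a S" "S \<subseteq> U" "card S = n + 1"
        "even (card {f\<in>S. a < f})" using lower_split[OF True U(2)] by blast
      have S'U: "S' \<subseteq> U" using S'up unfolding upper_tri_def by auto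
      have fU: "finite U" using U(2) card.infinite by fastforce
      have d: "(\<Sum>s\<in>S'. l' s * t s ^ (n+1)) - (\<Sum>s\<in>S. l s * t s ^ (n+1))
          = (if a \<in> S' then l' a else 0) * (\<Prod>f\<in>S. t a - t f)"
        by (rule flip_core[OF inj_on_subset[OF inj U(1)] fU S'U a(3) a(2) a(5) S(2) S'(2)])
      have P: "(\<Prod>f\<in>S. t a - t f) > 0"
        by (rule prod_pos_even[OF mono]) (use a U(1) bary_finite[OF S(2)] in auto)
      have "(if a \<in> S' then l' a else 0) \<ge> 0" using S'(2) unfolding bary_def by auto
      with P have "(if a \<in> S' then l' a else 0) * (\<Prod>f\<in>S. t a - t f) \<ge> 0" by simp
      with d have "(\<Sum>s\<in>S'. l' s * t s ^ (n+1)) - (\<Sum>s\<in>S. l s * t s ^ (n+1)) \<ge> 0" by linarith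
      then show ?thesis unfolding e e' by linarith
    qed
  qed
qed

lemma flip_strict:
  assumes mono: "strict_mono_on {1..m} t" and fl: "flip1 m n t T T'"
  shows "\<not> leq2 m n t T' T"
proof
  assume le: "leq2 m n t T' T"
  obtain U where T: "triangulation m n t T" and T': "triangulation m n t T'" and U: "U \<subseteq> {1..m}" "card U = n + 2"
    "{S\<in>T. S \<subseteq> U} = lower_tri n U" "T' = (T - lower_tri n U) \<union> upper_tri n U"
    using flip_data[OF fl] by blast
  have inj: "inj_on t {1..m}" using mono by (rule strict_mono_on_imp_inj_on)
  have fU: "finite U" using U(2) card.infinite by fastforce
  have Une: "U \<noteq> {}" using U(2) by auto
  define a where "a = Max U"
  define F where "F = U - {a}"
  have aU: "a \<in> U" unfolding a_def using fU Une by simp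
  have aF: "a \<notin> F" and UF: "U = insert a F" and FU: "F \<subseteq> U" using aU unfolding F_def by auto
  have fF: "finite F" using fU FU finite_subset by blast
  have cF: "card F = n + 1" using U(2) aU fU unfolding F_def by simp
  have Flow: "F \<in> lower_tri n U"
  proof -
    have e0: "{f\<in>F. a < f} = {}" unfolding F_def a_def using fU by (auto simp: not_less)
    have "U - F = {a}" using aU unfolding F_def by auto
    then have "\<forall>w\<in>U - F. even (card {f\<in>F. w < f})" unfolding e0 by (simp add: e0)
    then show ?thesis unfolding lower_tri_def using FU cF by blast
  qed
  have FT: "F \<in> T" using Flow U(3) by blast
  have FT': "F \<notin> T'"
  proof
    assume "F \<in> T'"
    then have "F \<in> upper_tri n U" using U(4) Flow by blast
    then show False using lower_upper_disj[OF Flow _ U(2)] by blast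
  qed
  define l0 :: "nat \<Rightarrow> real" where "l0 = (\<lambda>_. 1 / real (n+1))"
  define z where "z = (\<lambda>i. \<Sum>s\<in>F. l0 s * moment n t s i)"
  have b0: "bary n t F l0 z" unfolding bary_def z_def l0_def using cF by simp
  have cov: "(\<Union>S\<in>T. conv_pts n t S) = conv_pts n t {1..m}"
    using T unfolding triangulation_def by (elim conjE)
  have "z \<in> conv_pts n t F" using b0 by (auto simp: conv_iff)
  then have "z \<in> (\<Union>S\<in>T. conv_pts n t S)" using FT by blast
  then have z: "z \<in> conv_pts n t {1..m}" using cov by simp
  have FsubS: "F \<subseteq> B" if "B \<subseteq> F" "bary n t B l'' z" for B l''
  proof
    fix s assume s: "s \<in> F"
    have "l0 s = (if s \<in> B then l'' s else 0)"
      by (rule bary_sub[OF inj_on_subset[OF inj] _ that(1) b0 that(2) s]) (use FU U(1) cF in auto)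
    then show "s \<in> B" unfolding l0_def by (auto split: if_splits)
  qed
  obtain S' l' where S': "S' \<in> T'" "bary n t S' l' z" using tri_cover[OF T' z] by blast
  have fS': "finite S'" and cS': "card S' = n + 1" using bary_finite[OF S'(2)] tri_sub[OF T' S'(1)] by auto
  have noF: "F \<subseteq> S' \<Longrightarrow> False"
  proof -
    assume "F \<subseteq> S'"
    then have "F = S'" using card_subset_eq[OF fS'] cF cS' by simp
    then show False using FT' S'(1) by simp
  qed
  show False
  proof (cases "S' \<in> T")
    case True
    have "z \<in> conv_pts n t F \<inter> conv_pts n t S'" using b0 S'(2) by (auto simp: conv_iff)
    also have "\<dots> = conv_pts n t (F \<inter> S')" using T FT True unfolding triangulation_def by blast
    finally obtain l'' where "bary n t (F \<inter> S') l'' z" by (auto simp: conv_iff)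
    then have "F \<subseteq> F \<inter> S'" using FsubS by blast
    then show False using noF by blast
  next
    case False
    hence S'up: "S' \<in> upper_tri n U" using U(4) S'(1) by blast
    have S'U: "S' \<subseteq> U" using S'up unfolding upper_tri_def by auto
    have d: "(\<Sum>s\<in>S'. l' s * t s ^ (n+1)) - (\<Sum>s\<in>F. l0 s * t s ^ (n+1))
          = (if a \<in> S' then l' a else 0) * (\<Prod>f\<in>F. t a - t f)"
      by (rule flip_core[OF inj_on_subset[OF inj U(1)] fU S'U UF aF cF b0 S'(2)])
    have ev: "even (card {f\<in>F. a < f})" using Flow aU aF unfolding lower_tri_def by auto
    have P: "(\<Prod>f\<in>F. t a - t f) > 0"
      by (rule prod_pos_even[OF mono _ _ aF ev fF]) (use aU FU U(1) in auto)
    have e: "sigma_last n t T z = (\<Sum>s\<in>F. l0 s * t s ^ (n+1))" by (rule sigma_eq[OF mono T FT b0])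
    have e': "sigma_last n t T' z = (\<Sum>s\<in>S'. l' s * t s ^ (n+1))" by (rule sigma_eq[OF mono T' S'])
    have "sigma_last n t T' z \<le> sigma_last n t T z" using le z unfolding leq2_def by blast
    with d e e' have "(if a \<in> S' then l' a else 0) * (\<Prod>f\<in>F. t a - t f) \<le> 0" by linarith
    with P have mu: "(if a \<in> S' then l' a else 0) \<le> 0" by (simp add: mult_le_0_iff)
    have "bary n t (S' \<inter> F) l' z"
    proof (rule bary_drop[OF S'(2)])
      show "S' \<inter> F \<subseteq> S'" by blast
      show "\<forall>s\<in>S' - S' \<inter> F. l' s = 0"
      proof
        fix s assume s: "s \<in> S' - S' \<inter> F"
        then have "s = a" using S'U UF by auto
        have "l' a \<ge> 0" if "a \<in> S'" using S'(2) that unfolding bary_def by blast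
        then show "l' s = 0" using mu s \<open>s = a\<close> by (auto split: if_splits)
      qed
    qed
    then have "F \<subseteq> S' \<inter> F" using FsubS by blast
    then show False using noF by blast
  qed
qed

lemma leq2_trans: "leq2 m n t A B \<Longrightarrow> leq2 m n t B C \<Longrightarrow> leq2 m n t A C"
  unfolding leq2_def by (meson order_trans)

lemma leq2_refl: "leq2 m n t A A"
  unfolding leq2_def by simp

lemma flip_tri: "flip1 m n t A B \<Longrightarrow> triangulation m n t A \<and> triangulation m n t B"
  unfolding flip1_def by blast

lemma tri_fin: "finite {X. triangulation m n t X \<and> P X}"
proof (rule finite_subset[of _ "Pow (Pow {1..m})"])
  show "{X. triangulation m n t X \<and> P X} \<subseteq> Pow (Pow {1..m})"
    using tri_sub(1) by blast
qed simp

lemma leq1_leq2: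
  assumes mono: "strict_mono_on {1..m} t" and l: "leq1 m n t A B"
  shows "leq2 m n t A B"
proof -
  have "(flip1 m n t)\<^sup>+\<^sup>+ A B \<Longrightarrow> leq2 m n t A B"
  proof (induction rule: tranclp.induct)
    case (r_into_trancl a b) then show ?case using flip_mono[OF mono] by blast
  next
    case (trancl_into_trancl a b c) then show ?case using flip_mono[OF mono] leq2_trans by blast
  qed
  then show ?thesis using l leq2_refl unfolding leq1_def by blast
qed

lemma leq1_cons: "flip1 m n t A B \<Longrightarrow> leq1 m n t B C \<Longrightarrow> leq1 m n t A C"
  unfolding leq1_def by (auto intro: tranclp_into_tranclp2)

lemma leq1_snoc: "leq1 m n t A B \<Longrightarrow> flip1 m n t B C \<Longrightarrow> leq1 m n t A C"
  unfolding leq1_def by (auto intro: tranclp.trancl_into_trancl)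

lemma P2_leq1:
  assumes mono: "strict_mono_on {1..m} t"
    and P2: "\<forall>T T'. triangulation m n t T \<longrightarrow> triangulation m n t T' \<longrightarrow> less2 m n t T T' \<longrightarrow>
                     (\<exists>T''. triangulation m n t T'' \<and> flip1 m n t T T'' \<and> leq2 m n t T'' T')"
  shows "triangulation m n t T \<Longrightarrow> triangulation m n t T' \<Longrightarrow> leq2 m n t T T' \<Longrightarrow> leq1 m n t T T'"
proof (induction "card {X. triangulation m n t X \<and> leq2 m n t T X}" arbitrary: T rule: less_induct)
  case less
  show ?case
  proof (cases "T = T'")
    case True then show ?thesis using less.prems unfolding leq1_def by simp
  next
    case False
    then have "less2 m n t T T'" using less.prems(3) unfolding less2_def by simp
    then obtain T'' where T'': "triangulation m n t T''" "flip1 m n t T T''" "leq2 m n t T'' T'"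
      using P2 less.prems by blast
    have sub: "{X. triangulation m n t X \<and> leq2 m n t T'' X} \<subset> {X. triangulation m n t X \<and> leq2 m n t T X}"
    proof
      show "{X. triangulation m n t X \<and> leq2 m n t T'' X} \<subseteq> {X. triangulation m n t X \<and> leq2 m n t T X}"
        using flip_mono[OF mono T''(2)] leq2_trans by blast
      have "T \<notin> {X. triangulation m n t X \<and> leq2 m n t T'' X}" using flip_strict[OF mono T''(2)] by blast
      moreover have "T \<in> {X. triangulation m n t X \<and> leq2 m n t T X}" using less.prems leq2_refl by blast
      ultimately show "{X. triangulation m n t X \<and> leq2 m n t T'' X} \<noteq> {X. triangulation m n t X \<and> leq2 m n t T X}"
        by blast
    qed
    have "leq1 m n t T'' T'"
      using less.hyps[OF psubset_card_mono[OF tri_fin sub]] T''(1,3) less.prems(2) by blast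
    then show ?thesis using leq1_cons T''(2) by blast
  qed
qed

lemma P3_leq1:
  assumes mono: "strict_mono_on {1..m} t"
    and P3: "\<forall>T T'. triangulation m n t T \<longrightarrow> triangulation m n t T' \<longrightarrow> less2 m n t T T' \<longrightarrow>
                     (\<exists>T''. triangulation m n t T'' \<and> leq2 m n t T T'' \<and> flip1 m n t T'' T')"
  shows "triangulation m n t T \<Longrightarrow> triangulation m n t T' \<Longrightarrow> leq2 m n t T T' \<Longrightarrow> leq1 m n t T T'"
proof (induction "card {X. triangulation m n t X \<and> leq2 m n t X T'}" arbitrary: T' rule: less_induct)
  case less
  show ?case
  proof (cases "T = T'")
    case True then show ?thesis using less.prems unfolding leq1_def by simp
  next
    case False
    then have "less2 m n t T T'" using less.prems(3) unfolding less2_def by simp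
    then obtain T'' where T'': "triangulation m n t T''" "leq2 m n t T T''" "flip1 m n t T'' T'"
      using P3 less.prems by blast
    have sub: "{X. triangulation m n t X \<and> leq2 m n t X T''} \<subset> {X. triangulation m n t X \<and> leq2 m n t X T'}"
    proof
      show "{X. triangulation m n t X \<and> leq2 m n t X T''} \<subseteq> {X. triangulation m n t X \<and> leq2 m n t X T'}"
        using flip_mono[OF mono T''(3)] leq2_trans by blast
      have "T' \<notin> {X. triangulation m n t X \<and> leq2 m n t X T''}" using flip_strict[OF mono T''(3)] by blast
      moreover have "T' \<in> {X. triangulation m n t X \<and> leq2 m n t X T'}" using less.prems leq2_refl by blast
      ultimately show "{X. triangulation m n t X \<and> leq2 m n t X T''} \<noteq> {X. triangulation m n t X \<and> leq2 m n t X T'}"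
        by blast
    qed
    have "leq1 m n t T T''"
      using less.hyps[OF psubset_card_mono[OF tri_fin sub]] T''(1,2) less.prems(1) by blast
    then show ?thesis using leq1_snoc T''(3) by blast
  qed
qed

theorem lemma3p3:
  fixes m n :: nat and t :: "nat \<Rightarrow> real"
  assumes "strict_mono_on {1..m} t"
  defines "P1 \<equiv> (\<forall>T T'. triangulation m n t T \<longrightarrow> triangulation m n t T' \<longrightarrow>
                     (leq1 m n t T T' \<longleftrightarrow> leq2 m n t T T'))"
      and "P2 \<equiv> (\<forall>T T'. triangulation m n t T \<longrightarrow> triangulation m n t T' \<longrightarrow> less2 m n t T T' \<longrightarrow>
                     (\<exists>T''. triangulation m n t T'' \<and> flip1 m n t T T'' \<and> leq2 m n t T'' T'))"
      and "P3 \<equiv> (\<forall>T T'. triangulation m n t T \<longrightarrow> triangulation m n t T' \<longrightarrow> less2 m n t T T' \<longrightarrow>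
                     (\<exists>T''. triangulation m n t T'' \<and> leq2 m n t T T'' \<and> flip1 m n t T'' T'))"
  shows "(P1 \<longleftrightarrow> P2) \<and> (P2 \<longleftrightarrow> P3)"
proof -
  note mono = assms(1)
  have 12: "P2" if p1: "P1"
    unfolding P2_def
  proof (intro allI impI)
    fix T T' assume T: "triangulation m n t T" and T': "triangulation m n t T'" and l: "less2 m n t T T'"
    have "leq1 m n t T T'" using p1 T T' l unfolding P1_def less2_def by blast
    then have tr: "(flip1 m n t)\<^sup>+\<^sup>+ T T'" using l unfolding leq1_def less2_def by blast
    obtain T1 where st: "flip1 m n t T T1" "leq1 m n t T1 T'"
    proof (rule converse_tranclpE[OF tr])
      assume "flip1 m n t T T'" then show thesis using that T' unfolding leq1_def by blast
    next
      fix y assume "flip1 m n t T y" "(flip1 m n t)\<^sup>+\<^sup>+ y T'"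
      then show thesis using that unfolding leq1_def by blast
    qed
    have "triangulation m n t T1" using flip_tri[OF st(1)] by blast
    then show "\<exists>T''. triangulation m n t T'' \<and> flip1 m n t T T'' \<and> leq2 m n t T'' T'"
      using st p1 T' unfolding P1_def by blast
  qed
  have 13: "P3" if p1: "P1"
    unfolding P3_def
  proof (intro allI impI)
    fix T T' assume T: "triangulation m n t T" and T': "triangulation m n t T'" and l: "less2 m n t T T'"
    have "leq1 m n t T T'" using p1 T T' l unfolding P1_def less2_def by blast
    then have tr: "(flip1 m n t)\<^sup>+\<^sup>+ T T'" using l unfolding leq1_def less2_def by blast
    obtain T1 where st: "leq1 m n t T T1" "flip1 m n t T1 T'"
      using tr T unfolding leq1_def by (cases rule: tranclp.cases) blast+
    have "triangulation m n t T1" using flip_tri[OF st(2)] by blast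
    then show "\<exists>T''. triangulation m n t T'' \<and> leq2 m n t T T'' \<and> flip1 m n t T'' T'"
      using st p1 T unfolding P1_def by blast
  qed
  have 21: "P1" if p2: "P2"
    unfolding P1_def
    using leq1_leq2[OF mono] P2_leq1[OF mono p2[unfolded P2_def]] by blast
  have 31: "P1" if p3: "P3"
    unfolding P1_def
    using leq1_leq2[OF mono] P3_leq1[OF mono p3[unfolded P3_def]] by blast
  show ?thesis using 12 13 21 31 by blast
qed

end
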